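(* Let $0<c_1\le \frac{0.04}{d_{\max}}$ and suppose $t\le c_1 n$. Then for all sufficiently large $n$ and all $0\le k\le c_1 n$, \[ \frac{L}{n-d_{\max}}\cdot \exp\!\left(1-\frac{\sum_{i=1}^x d_i (a_i-t_i)}{n}\right)\le \frac{9}{10},\qquad\text{where } L=\sum_{i=1}^x (a_i-t_i)\, d_i\, e^{d_i k/n}. \]
   Context: Setting: $n$ vertices, a target set $B$ with $|B|=t$, each vertex $v$ has out-degree $d_v$ with $2\le d_{\min}\le d_v\le d_{\max}$ (constants). $d_1,\dots,d_x$ are the distinct out-degrees, $a_i$ is the number of vertices of out-degree $d_i$ (so $\sum_i a_i=n$), and $t_i$ the number of vertices of $B$ of out-degree $d_i$ (so $\sum_i t_i=t$). *)

theory Defs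
  imports Complex_Main
begin

end

theory Submission
  imports Defs
begin

lemma exp092: "exp (0.92::real) \<ge> 2.38"
proof -
  have "exp (0.92::real) = exp (0.115) ^ 8"
    using exp_of_nat_mult[of 8 "0.115::real"] by simp
  moreover have "(1.115::real)^8 \<le> exp 0.115 ^ 8"
    using exp_ge_add_one_self[of "0.115::real"] by (intro power_mono) simp_all
  moreover have "(2.38::real) \<le> 1.115^8" by (simp add: power_numeral_reduce)
  ultimately show ?thesis by linarith
qed

lemma keyy: fixes y :: real assumes "y \<ge> 1.96" shows "y * exp (1 - y) \<le> 1.96 * exp (-0.96)"
proof -
  have "1 + (y - 1.96) \<le> exp (y - 1.96)" by (rule exp_ge_add_one_self)
  hence "y \<le> 1.96 * exp (y - 1.96)" using assms by simp
  hence "y * exp (1 - y) \<le> 1.96 * exp (y - 1.96) * exp (1 - y)"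
    by (rule mult_right_mono) simp
  also have "\<dots> = 1.96 * exp (-0.96)" by (simp add: exp_add[symmetric])
  finally show ?thesis .
qed

theorem lemma6:
  fixes dmin dmax :: nat and c1 :: real
  assumes "2 \<le> dmin" and "dmin \<le> dmax"
    and "0 < c1" and "c1 \<le> 0.04 / real dmax"
  shows "\<exists>N. \<forall>n\<ge>N. \<forall>(x::nat) (d::nat \<Rightarrow> nat) (a::nat \<Rightarrow> nat) (ts::nat \<Rightarrow> nat) (t::nat) (k::nat).
     inj_on d {1..x}
     \<and> (\<forall>i\<in>{1..x}. dmin \<le> d i \<and> d i \<le> dmax \<and> 1 \<le> a i \<and> ts i \<le> a i)
     \<and> (\<Sum>i=1..x. a i) = n
     \<and> (\<Sum>i=1..x. ts i) = t
     \<and> real t \<le> c1 * real n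
     \<and> real k \<le> c1 * real n
     \<longrightarrow> (\<Sum>i=1..x. real (a i - ts i) * real (d i) * exp (real (d i) * real k / real n))
           / (real n - real dmax)
         * exp (1 - (\<Sum>i=1..x. real (d i) * real (a i - ts i)) / real n) \<le> 9 / 10"
proof -
  have dmax2: "real dmax \<ge> 2" using assms(1,2) by simp
  have c1b: "c1 * real dmax \<le> 0.04" using assms(4) dmax2
    by (simp add: le_divide_eq)
  have c1le: "c1 \<le> 0.02"
  proof -
    have "c1 * 2 \<le> c1 * real dmax" using dmax2 assms(3) by simp
    thus ?thesis using c1b by simp
  qed
  show ?thesis
  proof (rule exI[of _ "20*dmax"], intro allI impI)
    fix n x d a ts t k
    assume n: "n \<ge> 20*dmax" and H: "inj_on d {1..x}
     \<and> (\<forall>i\<in>{1..x}. dmin \<le> d i \<and> d i \<le> dmax \<and> 1 \<le> a i \<and> ts i \<le> a i)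
     \<and> (\<Sum>i=1..x. a i) = n
     \<and> (\<Sum>i=1..x. ts i) = t
     \<and> real t \<le> c1 * real n
     \<and> real k \<le> c1 * real n"
    from H have hi: "\<And>i. i\<in>{1..x} \<Longrightarrow> dmin \<le> d i \<and> d i \<le> dmax \<and> 1 \<le> a i \<and> ts i \<le> a i"
      and sa: "(\<Sum>i=1..x. a i) = n" and st: "(\<Sum>i=1..x. ts i) = t"
      and tn: "real t \<le> c1 * real n" and kn: "real k \<le> c1 * real n" by auto
    define S where "S i = real (a i - ts i)" for i
    define D where "D = (\<Sum>i=1..x. real (d i) * S i)"
    define L where "L = (\<Sum>i=1..x. S i * real (d i) * exp (real (d i) * real k / real n))"
    have nr: "real n \<ge> 20 * real dmax" using n by (metis of_nat_le_iff of_nat_mult of_nat_numeral)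
    have npos: "real n \<ge> 40" using nr dmax2 by linarith
    have sumS: "(\<Sum>i=1..x. S i) = real n - real t"
    proof -
      have "(\<Sum>i=1..x. S i) = (\<Sum>i=1..x. real (a i) - real (ts i))"
        by (rule sum.cong) (auto simp: S_def of_nat_diff hi)
      also have "\<dots> = real n - real t" using sa st
        by (simp add: sum_subtractf flip: of_nat_sum)
      finally show ?thesis .
    qed
    have "D \<ge> (\<Sum>i=1..x. 2 * S i)" unfolding D_def
    proof (rule sum_mono)
      fix i assume "i \<in> {1..x}"
      hence "real (d i) \<ge> 2" using hi assms(1) by (metis le_trans of_nat_le_iff of_nat_numeral)
      thus "2 * S i \<le> real (d i) * S i" by (rule mult_right_mono) (simp add: S_def)
    qed
    hence D1: "D \<ge> 2 * (real n - real t)" by (simp add: sum_distrib_left[symmetric] sumS)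
    have Dn: "D \<ge> 1.96 * real n"
    proof -
      have "real t \<le> 0.02 * real n" using tn c1le npos
        by (meson dual_order.trans mult_right_mono of_nat_0_le_iff)
      thus ?thesis using D1 by (simp add: power2_eq_square)
    qed
    have LD: "L \<le> exp 0.04 * D" unfolding L_def D_def sum_distrib_left
    proof (rule sum_mono)
      fix i assume i: "i \<in> {1..x}"
      have di: "real (d i) \<le> real dmax" using hi[OF i] by simp
      have "real (d i) * real k \<le> real dmax * (c1 * real n)"
        using di kn by (intro mult_mono) auto
      also have "\<dots> = (c1 * real dmax) * real n" by simp
      also have "\<dots> \<le> 0.04 * real n" using c1b npos by (intro mult_right_mono) auto
      finally have "real (d i) * real k / real n \<le> 0.04" using npos by (simp add: divide_le_eq)
      hence "exp (real (d i) * real k / real n) \<le> exp 0.04" by simp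
      hence "(S i * real (d i)) * exp (real (d i) * real k / real n) \<le> (S i * real (d i)) * exp 0.04"
        by (rule mult_left_mono) (simp add: S_def)
      thus "S i * real (d i) * exp (real (d i) * real k / real n) \<le> exp 0.04 * (real (d i) * S i)"
        by (simp add: mult_ac)
    qed
    define y where "y = D / real n"
    have y: "y \<ge> 1.96" using Dn npos by (simp add: y_def le_divide_eq)
    have DE: "D * exp (1 - D / real n) \<le> real n * (1.96 * exp (-0.96))"
    proof -
      have "D * exp (1 - D / real n) = real n * (y * exp (1 - y))" using npos by (simp add: y_def)
      also have "\<dots> \<le> real n * (1.96 * exp (-0.96))" using keyy[OF y] npos by (intro mult_left_mono) auto
      finally show ?thesis .
    qed
    have nd: "real n - real dmax > 0" using nr dmax2 by linarith
    have "L / (real n - real dmax) * exp (1 - D / real n) = L * exp (1 - D / real n) / (real n - real dmax)"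
      by simp
    also have "\<dots> \<le> exp 0.04 * D * exp (1 - D / real n) / (real n - real dmax)"
      using LD nd by (intro divide_right_mono mult_right_mono) auto
    also have "\<dots> \<le> exp 0.04 * (real n * (1.96 * exp (-0.96))) / (real n - real dmax)"
      using DE nd by (simp only: mult.assoc, intro divide_right_mono mult_left_mono) auto
    also have "\<dots> = 1.96 * exp (-0.92) * (real n / (real n - real dmax))"
      by (simp add: mult_ac exp_add[symmetric])
    also have "\<dots> \<le> 1.96 * (1 / 2.38) * (20 / 19)"
    proof (intro mult_mono)
      have "exp (-0.92::real) = 1 / exp 0.92" by (simp add: exp_minus field_simps)
      also have "\<dots> \<le> 1 / 2.38" using exp092 by (intro divide_left_mono) auto
      finally show "exp (-0.92::real) \<le> 1 / 2.38" .
      show "real n / (real n - real dmax) \<le> 20 / 19" using nd nr by (simp add: divide_le_eq)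
    qed (use nd in auto)
    also have "\<dots> \<le> 9/10" by simp
    finally show "(\<Sum>i=1..x. real (a i - ts i) * real (d i) * exp (real (d i) * real k / real n))
           / (real n - real dmax)
         * exp (1 - (\<Sum>i=1..x. real (d i) * real (a i - ts i)) / real n) \<le> 9 / 10"
      by (simp add: L_def D_def S_def)
  qed
qed

end
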